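(* Let $d>r\ge1$, and let $u,v$ be partitions with $l(u)\le r$, $u_1\le d-r$ and $l(v)=r$. Let $(w,b)\in LR(\chi(u),v)$ be such that $(w,\tilde u)$ is admissible, and let $\rho=\psi(w,\tilde u)$. Then either (1) $u=0$ and $\rho=v$, or (2) $|u|+i(w,\tilde u)+1+\|v\|^2\le\|\rho\|^2$.
   Context: A generalized partition of length $r$ is a weakly decreasing sequence of $r$ integers with diagram $\mathcal D(u)=\{(i,j)\in\{1,..,r\}\times\mathbb Z: j\le u_i\}$; $w/u$ is a skew partition if $\mathcal D(u)\subset\mathcal D(w)$, and $\mathcal D(w/u)=\mathcal D(w)\setminus\mathcal D(u)$. For a partition $u$ of length $\le r$, $\chi(u)=(-u_r,\dots,-u_1)$. $Y(v)=\{(i,j):1\le j\le v_i\}$. LR order on $\mathcal D(w/u)$: $(i,j)<_{LR}(i',j')$ if $i<i'$, and $(i,j)<_{LR}(i,j')$ if $j>j'$. A bijection $c=(c_1,c_2):\mathcal D(w/u)\to Y(v)$ satisfies the LR rules iff $c_1$ is strictly increasing in the height on each column, weakly increasing in the width on each row, and for each $x$ the set $\{c(y):y\le_{LR}x\}$ is a Young diagram. $LR(\chi(u),v)$ is the set of pairs $(w,b)$ with $w$ a generalized partition of length $r$, $\mathcal D(\chi(u))\subset\mathcal D(w)$, and $b:Y(v)\to\mathcal D(w/\chi(u))$ a bijection whose inverse satisfies the LR rules. $\tilde u$ is the transpose of $u$, viewed as $(\tilde u_1,..,\tilde u_{d-r})$; for $a=(w,\tilde u)\in\mathbb Z^d$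 and $I(d)=(1,..,d)$: admissible means the entries of $a-I(d)$ are pairwise distinct, $\psi(a)=(a-I(d))^{\ge}+I(d)$ ($\ge$ = weakly decreasing rearrangement), $i(a)=\operatorname{card}\{(i,j):i<j,(a-I(d))_i<(a-I(d))_j\}$. $|u|=\sum u_i$, $\|u\|^2=\sum_j\tilde u_j^2$, $l(u)$ = number of nonzero parts. *)

theory Defs
  imports Main
begin

(* Conventions: sequences are int lists, entries are 1-indexed in the paper,
   so the paper's u_i is  u ! (i - 1).  Cells of diagrams are pairs
   (row, column) :: nat \<times> int. *)

definition gen_partition :: "nat \<Rightarrow> int list \<Rightarrow> bool" where
  "gen_partition r w \<longleftrightarrow> length w = r \<and> sorted_wrt (\<ge>) w"

definition is_partition :: "int list \<Rightarrow> bool" where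
  "is_partition u \<longleftrightarrow> sorted_wrt (\<ge>) u \<and> (\<forall>x\<in>set u. 0 \<le> x)"

definition plen :: "int list \<Rightarrow> nat" where
  "plen u = card {i. i < length u \<and> u ! i \<noteq> 0}"

definition chi :: "int list \<Rightarrow> int list" where
  "chi u = rev (map uminus u)"

definition diagram :: "int list \<Rightarrow> (nat \<times> int) set" where
  "diagram u = {(i, j). 1 \<le> i \<and> i \<le> length u \<and> j \<le> u ! (i - 1)}"

definition skew_diagram :: "int list \<Rightarrow> int list \<Rightarrow> (nat \<times> int) set" where
  "skew_diagram w u = diagram w - diagram u"

definition young :: "int list \<Rightarrow> (nat \<times> int) set" where
  "young v = {(i, j). 1 \<le> i \<and> i \<le> length v \<and> 1 \<le> j \<and> j \<le> v ! (i - 1)}"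

definition is_young_diagram :: "(nat \<times> int) set \<Rightarrow> bool" where
  "is_young_diagram S \<longleftrightarrow> (\<exists>lam. is_partition lam \<and> S = young lam)"

definition lr_less :: "nat \<times> int \<Rightarrow> nat \<times> int \<Rightarrow> bool" where
  "lr_less x y \<longleftrightarrow> fst x < fst y \<or> (fst x = fst y \<and> snd x > snd y)"

definition lr_le :: "nat \<times> int \<Rightarrow> nat \<times> int \<Rightarrow> bool" where
  "lr_le x y \<longleftrightarrow> lr_less x y \<or> x = y"

definition LR_rules :: "(nat \<times> int \<Rightarrow> nat \<times> int) \<Rightarrow> (nat \<times> int) set \<Rightarrow> (nat \<times> int) set \<Rightarrow> bool" where
  "LR_rules c D Y \<longleftrightarrow> bij_betw c D Y
    \<and> (\<forall>x\<in>D. \<forall>y\<in>D. snd x = snd y \<and> fst x < fst y \<longrightarrow> fst (c x) < fst (c y))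
    \<and> (\<forall>x\<in>D. \<forall>y\<in>D. fst x = fst y \<and> snd x < snd y \<longrightarrow> fst (c x) \<le> fst (c y))
    \<and> (\<forall>x\<in>D. is_young_diagram (c ` {y\<in>D. lr_le y x}))"

definition LR :: "nat \<Rightarrow> int list \<Rightarrow> int list \<Rightarrow> (int list \<times> (nat \<times> int \<Rightarrow> nat \<times> int)) set" where
  "LR r x v = {(w, b). gen_partition r w \<and> diagram x \<subseteq> diagram w
      \<and> bij_betw b (young v) (skew_diagram w x)
      \<and> LR_rules (the_inv_into (young v) b) (skew_diagram w x) (young v)}"

(* transpose of u, viewed as (tilde u_1, ..., tilde u_n) *)
definition conj_part :: "nat \<Rightarrow> int list \<Rightarrow> int list" where
  "conj_part n u = map (\<lambda>j. int (card {i. i < length u \<and> int j \<le> u ! i})) [1..<n+1]"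

definition shiftI :: "int list \<Rightarrow> int list" where
  "shiftI a = map (\<lambda>k. a ! k - int (k + 1)) [0..<length a]"

definition admissible :: "int list \<Rightarrow> bool" where
  "admissible a \<longleftrightarrow> distinct (shiftI a)"

definition psi :: "int list \<Rightarrow> int list" where
  "psi a = map (\<lambda>k. rev (sort (shiftI a)) ! k + int (k + 1)) [0..<length a]"

definition inv_count :: "int list \<Rightarrow> nat" where
  "inv_count a = card {(i, j). i < j \<and> j < length a \<and> shiftI a ! i < shiftI a ! j}"

definition psize :: "int list \<Rightarrow> int" where
  "psize u = sum_list u"

definition norm2 :: "int list \<Rightarrow> int" where
  "norm2 u = (\<Sum>j\<in>{1..Max (insert 0 (set u))}. int (card {i. i < length u \<and> j \<le> u ! i}) ^ 2)"

end

theory Submission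
  imports Defs
begin

lemma card_filter_sum:
  fixes n :: nat
  shows "int (card {i. i < n \<and> P i}) = (\<Sum>k<n. if P k then 1 else 0)"
proof -
  have e: "{i. i < n \<and> P i} = {k\<in>{..<n}. P k}" by auto
  have "card {k\<in>{..<n}. P k} = (\<Sum>k\<in>{k\<in>{..<n}. P k}. 1)" by (rule card_eq_sum)
  also have "\<dots> = (\<Sum>k<n. if P k then 1 else 0)" by (rule sum.inter_filter) simp
  finally have "card {i. i < n \<and> P i} = (\<Sum>k<n. if P k then 1 else 0)" by (simp only: e)
  then have "int (card {i. i < n \<and> P i}) = int (\<Sum>k<n. if P k then 1 else 0)" by simp
  also have "\<dots> = (\<Sum>k<n. if P k then 1 else 0)" unfolding of_nat_sum by (intro sum.cong) auto
  finally show ?thesis .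
qed
lemma card_Icc_le:
  fixes z M :: int
  assumes "z \<le> M"
  shows "(\<Sum>j\<in>{1..M}. (if j \<le> z then 1 else 0 :: int)) = max 0 z"
proof -
  have "(\<Sum>j\<in>{1..M}. (if j \<le> z then 1 else 0 :: int)) = (\<Sum>j\<in>{j\<in>{1..M}. j \<le> z}. 1)"
    by (rule sum.inter_filter[symmetric]) simp
  also have "{j\<in>{1..M}. j \<le> z} = {1..z}" using assms by auto
  also have "(\<Sum>j\<in>{1..z}. (1::int)) = max 0 z" by simp
  finally show ?thesis .
qed

lemma norm2_eq:
  "norm2 l = (\<Sum>k<length l. \<Sum>m<length l. max 0 (min (l!k) (l!m)))"
proof -
  define M where "M = Max (insert 0 (set l))"
  have le: "l!k \<le> M" if "k < length l" for k
    unfolding M_def using that by (intro Max_ge) auto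
  have "norm2 l = (\<Sum>j\<in>{1..M}. (\<Sum>k<length l. if j \<le> l!k then 1 else 0)^2)"
    unfolding norm2_def M_def by (simp add: card_filter_sum)
  also have "\<dots> = (\<Sum>j\<in>{1..M}. \<Sum>k<length l. \<Sum>m<length l. (if j \<le> min (l!k) (l!m) then 1 else 0 :: int))"
    by (simp only: power2_eq_square sum_product) (intro sum.cong refl, simp)
  also have "\<dots> = (\<Sum>k<length l. \<Sum>m<length l. \<Sum>j\<in>{1..M}. (if j \<le> min (l!k) (l!m) then 1 else 0 :: int))"
    by (subst sum.swap) (rule sum.cong[OF refl], rule sum.swap)
  also have "\<dots> = (\<Sum>k<length l. \<Sum>m<length l. max 0 (min (l!k) (l!m)))"
    by (intro sum.cong refl card_Icc_le) (use le in \<open>auto simp: min_le_iff_disj\<close>)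
  finally show ?thesis .
qed

lemma sum_max_index:
  fixes f :: "nat \<Rightarrow> int"
  shows "(\<Sum>k<N. \<Sum>m<N. f (max k m)) = (\<Sum>m<N. (2 * int m + 1) * f m)"
proof (induction N)
  case 0 then show ?case by simp
next
  case (Suc N)
  have i1: "(\<Sum>m<Suc N. f (max k m)) = (\<Sum>m<N. f (max k m)) + f N" if "k < N" for k
    using that by (simp add: max_def)
  have i2: "(\<Sum>m<Suc N. f (max N m)) = (\<Sum>m<N. f N) + f N"
    by (simp add: max_def)
  have "(\<Sum>k<Suc N. \<Sum>m<Suc N. f (max k m)) =
        (\<Sum>k<N. \<Sum>m<Suc N. f (max k m)) + (\<Sum>m<Suc N. f (max N m))"
    by (rule sum.lessThan_Suc)
  also have "(\<Sum>k<N. \<Sum>m<Suc N. f (max k m)) = (\<Sum>k<N. (\<Sum>m<N. f (max k m)) + f N)"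
    by (rule sum.cong) (simp_all add: i1)
  also have "\<dots> = (\<Sum>k<N. \<Sum>m<N. f (max k m)) + (\<Sum>k<N. f N)"
    by (rule sum.distrib)
  finally have "(\<Sum>k<Suc N. \<Sum>m<Suc N. f (max k m)) =
        (\<Sum>k<N. \<Sum>m<N. f (max k m)) + (\<Sum>k<N. f N) + (\<Sum>m<N. f N) + f N"
    using i2 by simp
  also have "\<dots> = (\<Sum>m<N. (2 * int m + 1) * f m) + int N * f N + int N * f N + f N"
    using Suc.IH by simp
  also have "\<dots> = (\<Sum>m<Suc N. (2 * int m + 1) * f m)"
    by (simp add: ring_distribs)
  finally show ?case .
qed

lemma norm2_upper:
  assumes "\<forall>x\<in>set l. 0 \<le> x"
  shows "norm2 l \<le> (\<Sum>m<length l. (2 * int m + 1) * l!m)"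
proof -
  have "norm2 l \<le> (\<Sum>k<length l. \<Sum>m<length l. l ! (max k m))"
    unfolding norm2_eq
  proof (intro sum_mono)
    fix k m assume "k \<in> {..<length l}" "m \<in> {..<length l}"
    then have "0 \<le> l!k" "0 \<le> l!m" using assms by auto
    then show "max 0 (min (l ! k) (l ! m)) \<le> l ! max k m"
      by (cases "k \<le> m") (simp_all add: max_def min_def)
  qed
  also have "\<dots> = (\<Sum>m<length l. (2 * int m + 1) * l!m)"
    by (rule sum_max_index)
  finally show ?thesis .
qed

lemma norm2_lower:
  assumes "\<And>k m. k \<le> m \<Longrightarrow> m < length l \<Longrightarrow> l!m \<le> l!k"
  shows "(\<Sum>m<length l. (2 * int m + 1) * l!m) \<le> norm2 l"
proof -
  have "(\<Sum>m<length l. (2 * int m + 1) * l!m) = (\<Sum>k<length l. \<Sum>m<length l. l ! (max k m))"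
    by (rule sum_max_index[symmetric])
  also have "\<dots> \<le> norm2 l"
    unfolding norm2_eq
  proof (intro sum_mono)
    fix k m assume "k \<in> {..<length l}" "m \<in> {..<length l}"
    then show "l ! max k m \<le> max 0 (min (l ! k) (l ! m))"
      using assms[of k m] assms[of m k] by (cases "k \<le> m") (simp_all add: max_def min_def)
  qed
  finally show ?thesis .
qed

lemma shiftI_nth: "k < length a \<Longrightarrow> shiftI a ! k = a!k - int (k+1)"
  by (simp add: shiftI_def)

lemma length_shiftI[simp]: "length (shiftI a) = length a"
  by (simp add: shiftI_def)

lemma length_psi[simp]: "length (psi a) = length a"
  by (simp add: psi_def)

lemma psi_nth: "k < length a \<Longrightarrow> psi a ! k = rev (sort (shiftI a)) ! k + int (k+1)"
  by (simp add: psi_def)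

lemma sum_nth_distinct:
  assumes "distinct xs"
  shows "(\<Sum>k<length xs. f (xs!k)) = (\<Sum>x\<in>set xs. f x)"
proof -
  have "inj_on (nth xs) {..<length xs}"
    using assms by (auto simp: inj_on_def nth_eq_iff_index_eq)
  moreover have "set xs = nth xs ` {..<length xs}"
    by (auto simp: in_set_conv_nth)
  ultimately show ?thesis by (simp add: sum.reindex)
qed

lemma card_greater_nth:
  assumes "distinct xs" "k < length xs"
  shows "card {y\<in>set xs. y > xs!k} = card {l. l < length xs \<and> xs!l > xs!k}"
proof -
  have "inj_on (nth xs) {l. l < length xs \<and> xs!l > xs!k}"
    using assms by (auto simp: inj_on_def nth_eq_iff_index_eq)
  moreover have "{y\<in>set xs. y > xs!k} = nth xs ` {l. l < length xs \<and> xs!l > xs!k}"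
    by (auto simp: in_set_conv_nth)
  ultimately show ?thesis by (simp add: card_image)
qed

lemma strict_dec_rank:
  fixes xs :: "int list"
  assumes "sorted_wrt (>) xs" "k < length xs"
  shows "card {l. l < length xs \<and> xs!l > xs!k} = k"
proof -
  have "{l. l < length xs \<and> xs!l > xs!k} = {..<k}"
  proof (intro set_eqI iffI)
    fix l assume l: "l \<in> {l. l < length xs \<and> xs!l > xs!k}"
    show "l \<in> {..<k}"
    proof (rule ccontr)
      assume "l \<notin> {..<k}"
      then have "k \<le> l" by simp
      then have "xs!l \<le> xs!k" using assms l
        by (cases "k = l") (auto dest: sorted_wrt_nth_less[of "(>)" xs k l])
      then show False using l by simp
    qed
  next
    fix l assume "l \<in> {..<k}"
    then show "l \<in> {l. l < length xs \<and> xs!l > xs!k}"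
      using assms sorted_wrt_nth_less[of "(>)" xs l k] by auto
  qed
  then show ?thesis by simp
qed

lemma strict_dec_diff:
  fixes xs :: "int list"
  assumes "sorted_wrt (>) xs" "k \<le> m" "m < length xs"
  shows "xs!m + int (m - k) \<le> xs!k"
  using assms(2,3)
proof (induction m rule: dec_induct)
  case base then show ?case by simp
next
  case (step n)
  have "xs!(Suc n) < xs!n" using assms(1) step sorted_wrt_nth_less[of "(>)" xs n "Suc n"] by auto
  moreover have "xs!n + int (n - k) \<le> xs!k" using step by simp
  ultimately show ?case using step(1) by (simp add: of_nat_diff)
qed

context
  fixes a :: "int list"
  assumes adm: "distinct (shiftI a)"
begin

definition "sig = rev (sort (shiftI a))"

lemma sig_props: "length sig = length a" "set sig = set (shiftI a)" "distinct sig" "sorted_wrt (>) sig"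
proof -
  show "length sig = length a" by (simp add: sig_def)
  show "set sig = set (shiftI a)" by (simp add: sig_def)
  show "distinct sig" using adm by (simp add: sig_def)
  have "sorted_wrt (<) (sort (shiftI a))" using adm by (simp add: strict_sorted_iff)
  then show "sorted_wrt (>) sig" by (simp add: sig_def sorted_wrt_rev)
qed

lemma psi_dec: "k \<le> m \<Longrightarrow> m < length a \<Longrightarrow> psi a ! m \<le> psi a ! k"
  using strict_dec_diff[OF sig_props(4), of k m] sig_props(1)
  by (simp add: psi_nth sig_def[symmetric] of_nat_diff)

end

lemma int_k_sum: "k \<le> d \<Longrightarrow> int k = (\<Sum>l<d. if l < k then 1 else 0)"
proof -
  assume "k \<le> d"
  then have "{i. i < d \<and> i < k} = {..<k}" by auto
  then show ?thesis using card_filter_sum[of d "\<lambda>l. l < k"] by simp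
qed

lemma inv_identity:
  fixes s :: "nat \<Rightarrow> int"
  assumes inj: "inj_on s {..<d}"
  shows "(\<Sum>k<d. (2 * int (card {l. l < d \<and> s l > s k}) + 1) * s k)
       = (\<Sum>k<d. (2 * int k + 1) * s k) - 2 * (\<Sum>i<d. \<Sum>j<d. if i < j \<and> s i < s j then s j - s i else 0)"
proof -
  have per: "(int (card {l. l < d \<and> s l > s k}) - int k) * s k =
      (\<Sum>l<d. if k < l \<and> s k < s l then s k else 0) - (\<Sum>l<d. if l < k \<and> s l < s k then s k else 0)"
    if k: "k < d" for k
  proof -
    have "int (card {l. l < d \<and> s l > s k}) - int k =
        (\<Sum>l<d. (if s l > s k then 1 else 0) - (if l < k then 1 else 0))"
      using card_filter_sum[of d "\<lambda>l. s l > s k"] int_k_sum[of k d] k by (simp add: sum_subtractf)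
    also have "\<dots> = (\<Sum>l<d. (if k < l \<and> s k < s l then 1 else 0) - (if l < k \<and> s l < s k then 1 else 0))"
    proof (intro sum.cong refl)
      fix l assume l: "l \<in> {..<d}"
      show "(if s l > s k then 1 else 0) - (if l < k then 1 else 0 :: int) =
            (if k < l \<and> s k < s l then 1 else 0) - (if l < k \<and> s l < s k then 1 else 0)"
      proof (cases "l = k")
        case True then show ?thesis by simp
      next
        case False
        then have "s l \<noteq> s k" using inj l k by (auto simp: inj_on_def)
        then show ?thesis using False by (auto simp: not_less_iff_gr_or_eq)
      qed
    qed
    finally have X: "int (card {l. l < d \<and> s l > s k}) - int k =
        (\<Sum>l<d. (if k < l \<and> s k < s l then 1 else 0) - (if l < k \<and> s l < s k then 1 else 0))" .
    show ?thesis unfolding X sum_subtractf[symmetric] sum_distrib_right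
      by (intro sum.cong refl) auto
  qed
  have sw: "(\<Sum>k<d. \<Sum>l<d. if l < k \<and> s l < s k then s k else 0) =
            (\<Sum>i<d. \<Sum>j<d. if i < j \<and> s i < s j then s j else 0)"
    by (rule sum.swap)
  have "(\<Sum>k<d. (2 * int (card {l. l < d \<and> s l > s k}) + 1) * s k) - (\<Sum>k<d. (2 * int k + 1) * s k)
      = 2 * (\<Sum>k<d. (int (card {l. l < d \<and> s l > s k}) - int k) * s k)"
    by (simp add: sum_subtractf[symmetric] sum_distrib_left algebra_simps)
  also have "\<dots> = 2 * (\<Sum>k<d. (\<Sum>l<d. if k < l \<and> s k < s l then s k else 0) - (\<Sum>l<d. if l < k \<and> s l < s k then s k else 0))"
    using per by simp
  also have "\<dots> = 2 * ((\<Sum>i<d. \<Sum>j<d. if i < j \<and> s i < s j then s i else 0) - (\<Sum>i<d. \<Sum>j<d. if i < j \<and> s i < s j then s j else 0))"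
    using sw by (simp add: sum_subtractf)
  also have "\<dots> = - 2 * (\<Sum>i<d. \<Sum>j<d. if i < j \<and> s i < s j then s j - s i else 0)"
    by (simp add: sum_subtractf[symmetric] if_distrib cong: if_cong) (simp add: sum_negf[symmetric], intro sum.cong refl, simp)
  finally show ?thesis by simp
qed

lemma card_pairs_sum:
  fixes d :: nat
  shows "int (card {(i, j). i < j \<and> j < d \<and> P i j}) = (\<Sum>i<d. \<Sum>j<d. if i < j \<and> P i j then 1 else 0)"
proof -
  have e: "{(i, j). i < j \<and> j < d \<and> P i j} = {x\<in>{..<d} \<times> {..<d}. fst x < snd x \<and> P (fst x) (snd x)}"
    by auto
  have "card {x\<in>{..<d} \<times> {..<d}. fst x < snd x \<and> P (fst x) (snd x)}
      = (\<Sum>x\<in>{x\<in>{..<d} \<times> {..<d}. fst x < snd x \<and> P (fst x) (snd x)}. 1)" by (rule card_eq_sum)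
  also have "\<dots> = (\<Sum>x\<in>{..<d} \<times> {..<d}. if fst x < snd x \<and> P (fst x) (snd x) then 1 else 0)"
    by (rule sum.inter_filter) simp
  also have "\<dots> = (\<Sum>i<d. \<Sum>j<d. if i < j \<and> P i j then 1 else 0)"
    by (simp add: sum.cartesian_product split_beta)
  finally have "card {(i, j). i < j \<and> j < d \<and> P i j} = (\<Sum>i<d. \<Sum>j<d. if i < j \<and> P i j then 1 else 0)"
    by (simp only: e)
  then show ?thesis unfolding of_nat_sum by (simp add: of_nat_sum) (intro sum.cong refl, simp)
qed

lemma inv_count_sum:
  "int (inv_count a) = (\<Sum>i<length a. \<Sum>j<length a. if i < j \<and> shiftI a ! i < shiftI a ! j then 1 else 0)"
  unfolding inv_count_def by (rule card_pairs_sum)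

lemma psi_weighted:
  assumes adm: "distinct (shiftI a)"
  shows "(\<Sum>k<length a. (2 * int k + 1) * psi a ! k) =
     (\<Sum>k<length a. (2 * int k + 1) * a ! k)
     - 2 * (\<Sum>i<length a. \<Sum>j<length a. if i < j \<and> shiftI a ! i < shiftI a ! j then shiftI a ! j - shiftI a ! i else 0)"
proof -
  define d where "d = length a"
  define s where "s = shiftI a"
  define g where "g = (\<lambda>x. (2 * int (card {y\<in>set s. y > x}) + 1) * x)"
  have ls: "length s = d" by (simp add: s_def d_def)
  have ds: "distinct s" using adm by (simp add: s_def)
  note sp = sig_props[OF adm]
  have sig_s: "sig a = rev (sort s)" by (simp add: sig_def[OF adm] s_def)
  have "(\<Sum>k<d. (2 * int k + 1) * sig a ! k) = (\<Sum>k<length (sig a). g (sig a ! k))"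
  proof (intro sum.cong)
    show "{..<d} = {..<length (sig a)}" using sp by (simp add: d_def)
  next
    fix k assume k: "k \<in> {..<length (sig a)}"
    have "card {y\<in>set s. y > sig a ! k} = card {y\<in>set (sig a). y > sig a ! k}" using sp by (simp add: s_def)
    also have "\<dots> = k" using card_greater_nth[OF sp(3)] strict_dec_rank[OF sp(4)] k by simp
    finally show "(2 * int k + 1) * sig a ! k = g (sig a ! k)" by (simp add: g_def)
  qed
  also have "\<dots> = (\<Sum>x\<in>set (sig a). g x)" by (rule sum_nth_distinct[OF sp(3)])
  also have "\<dots> = (\<Sum>x\<in>set s. g x)" using sp by (simp add: s_def)
  also have "\<dots> = (\<Sum>k<d. g (s ! k))" using sum_nth_distinct[OF ds, of g] ls by simp
  also have "\<dots> = (\<Sum>k<d. (2 * int (card {l. l < d \<and> s!l > s!k}) + 1) * s!k)"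
    by (intro sum.cong refl) (simp add: g_def card_greater_nth[OF ds] ls)
  also have "\<dots> = (\<Sum>k<d. (2 * int k + 1) * s ! k) - 2 * (\<Sum>i<d. \<Sum>j<d. if i < j \<and> s!i < s!j then s!j - s!i else 0)"
    by (rule inv_identity[of "\<lambda>k. s ! k"]) (use ds ls in \<open>auto simp: inj_on_def nth_eq_iff_index_eq\<close>)
  finally have X: "(\<Sum>k<d. (2 * int k + 1) * sig a ! k) = \<dots>" .
  have "(\<Sum>k<d. (2 * int k + 1) * psi a ! k) = (\<Sum>k<d. (2 * int k + 1) * sig a ! k + (2 * int k + 1) * int (k+1))"
    by (intro sum.cong refl) (simp add: psi_nth d_def sig_def[OF adm] ring_distribs)
  also have "\<dots> = (\<Sum>k<d. (2 * int k + 1) * sig a ! k) + (\<Sum>k<d. (2 * int k + 1) * int (k+1))"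
    by (rule sum.distrib)
  finally have P: "(\<Sum>k<d. (2 * int k + 1) * psi a ! k) = (\<Sum>k<d. (2 * int k + 1) * sig a ! k) + (\<Sum>k<d. (2 * int k + 1) * int (k+1))" .
  have "(\<Sum>k<d. (2 * int k + 1) * a ! k) = (\<Sum>k<d. (2 * int k + 1) * s ! k + (2 * int k + 1) * int (k+1))"
    by (intro sum.cong refl) (simp add: s_def shiftI_nth d_def ring_distribs)
  also have "\<dots> = (\<Sum>k<d. (2 * int k + 1) * s ! k) + (\<Sum>k<d. (2 * int k + 1) * int (k+1))"
    by (rule sum.distrib)
  finally have Q: "(\<Sum>k<d. (2 * int k + 1) * a ! k) = (\<Sum>k<d. (2 * int k + 1) * s ! k) + (\<Sum>k<d. (2 * int k + 1) * int (k+1))" .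
  show ?thesis using P Q X unfolding d_def s_def by linarith
qed

definition rowset :: "(nat \<Rightarrow> int) \<Rightarrow> (nat \<Rightarrow> int) \<Rightarrow> nat \<Rightarrow> (nat \<times> int) set" where
  "rowset f g k = {(i, j). 1 \<le> i \<and> i \<le> k \<and> g (i - 1) < j \<and> j \<le> f (i - 1)}"

lemma rowset_Suc: "rowset f g (Suc k) = rowset f g k \<union> ({Suc k} \<times> {g k<..f k})"
  unfolding rowset_def by (auto simp: le_Suc_eq)

lemma rowset_card:
  "finite (rowset f g k) \<and> int (card (rowset f g k)) = (\<Sum>i<k. max 0 (f i - g i))"
proof (induction k)
  case 0
  have "rowset f g 0 = {}" unfolding rowset_def by auto
  then show ?case by simp
next
  case (Suc k)
  have disj: "rowset f g k \<inter> ({Suc k} \<times> {g k<..f k}) = {}" unfolding rowset_def by auto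
  have fin: "finite ({Suc k} \<times> {g k<..f k})" by simp
  have c2: "int (card ({Suc k} \<times> {g k<..f k})) = max 0 (f k - g k)"
    by (simp add: card_cartesian_product)
  show ?case
    using Suc.IH fin disj c2 by (simp add: rowset_Suc card_Un_disjoint)
qed

lemma young_col1:
  assumes "is_partition lam" "(L, m) \<in> young lam" "1 \<le> l" "l \<le> L"
  shows "(l, 1) \<in> young lam"
proof -
  have L: "1 \<le> L" "L \<le> length lam" "1 \<le> m" "m \<le> lam ! (L - 1)"
    using assms(2) by (auto simp: young_def)
  have "lam ! (L - 1) \<le> lam ! (l - 1)"
  proof (cases "l = L")
    case True then show ?thesis by simp
  next
    case False
    then have "l - 1 < L - 1" using assms(3,4) by simp
    then show ?thesis using assms(1) L unfolding is_partition_def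
      by (auto dest: sorted_wrt_nth_less[of "(\<ge>)" lam "l - 1" "L - 1"])
  qed
  then show ?thesis using L assms(3,4) by (auto simp: young_def)
qed

lemma LR_row_bound:
  assumes R: "LR_rules c D Y"
    and Drow: "\<And>z. z \<in> D \<Longrightarrow> 1 \<le> fst z"
  shows "z \<in> D \<Longrightarrow> fst (c z) \<le> fst z"
proof -
  have bij: "bij_betw c D Y"
    and row: "\<And>x y. x \<in> D \<Longrightarrow> y \<in> D \<Longrightarrow> fst x = fst y \<Longrightarrow> snd x < snd y \<Longrightarrow> fst (c x) \<le> fst (c y)"
    and yd: "\<And>x. x \<in> D \<Longrightarrow> is_young_diagram (c ` {y\<in>D. lr_le y x})"
    using R unfolding LR_rules_def by blast+
  have inj: "inj_on c D" using bij by (simp add: bij_betw_def)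
  have get: "\<exists>y\<in>D. lr_le y z \<and> c y = (l, 1)" if z: "z \<in> D" "1 \<le> l" "l \<le> fst (c z)" for z l
  proof -
    obtain lam where lam: "is_partition lam" "c ` {y\<in>D. lr_le y z} = young lam"
      using yd[OF z(1)] unfolding is_young_diagram_def by blast
    have "c z \<in> young lam" using lam(2) z(1) by (auto simp: lr_le_def)
    then have "(fst (c z), snd (c z)) \<in> young lam" by simp
    then have "(l, 1) \<in> young lam" using young_col1[OF lam(1)] z by blast
    then show ?thesis using lam(2) by (metis (mono_tags, lifting) imageE mem_Collect_eq)
  qed
  have main: "\<forall>z\<in>D. l + 1 \<le> fst (c z) \<longrightarrow> l + 1 \<le> fst z" for l
  proof (induction l)
    case 0 then show ?case using Drow by simp
  next
    case (Suc l)
    show ?case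
    proof (intro ballI impI)
      fix z assume z: "z \<in> D" "Suc l + 1 \<le> fst (c z)"
      obtain z' where z': "z' \<in> D" "lr_le z' z" "c z' = (l + 2, 1)"
        using get[OF z(1), of "l + 2"] z(2) by auto
      obtain y where y: "y \<in> D" "lr_le y z'" "c y = (l + 1, 1)"
        using get[OF z'(1), of "l + 1"] z'(3) by auto
      have "y \<noteq> z'" using y(3) z'(3) by auto
      then have lt: "lr_less y z'" using y(2) by (simp add: lr_le_def)
      have fy: "l + 1 \<le> fst y" using Suc.IH y(1,3) by simp
      have "fst y < fst z'"
      proof (rule ccontr)
        assume "\<not> fst y < fst z'"
        then have "fst y = fst z'" "snd y > snd z'" using lt by (auto simp: lr_less_def)
        then have "fst (c z') \<le> fst (c y)" using row[OF z'(1) y(1)] by simp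
        then show False using y(3) z'(3) by simp
      qed
      moreover have "fst z' \<le> fst z" using z'(2) by (auto simp: lr_le_def lr_less_def)
      ultimately show "Suc l + 1 \<le> fst z" using fy by simp
    qed
  qed
  show "z \<in> D \<Longrightarrow> fst (c z) \<le> fst z"
  proof -
    assume z: "z \<in> D"
    show ?thesis using main[of "fst (c z) - 1"] z by (cases "fst (c z)") auto
  qed
qed

lemma LR_extract:
  assumes LRm: "(w, b) \<in> LR r x v" and lx: "length x = r" and vp: "is_partition v" and lv: "length v = r"
  shows "length w = r" "sorted_wrt (\<ge>) w" "\<forall>i<r. x!i \<le> w!i"
    "\<forall>k\<le>r. (\<Sum>i<k. w!i - x!i) \<le> (\<Sum>i<k. v!i)"
    "(\<Sum>i<r. w!i - x!i) = (\<Sum>i<r. v!i)"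
proof -
  define c where "c = the_inv_into (young v) b"
  have gp: "gen_partition r w" and sub: "diagram x \<subseteq> diagram w"
    and R: "LR_rules c (skew_diagram w x) (young v)"
    using LRm unfolding LR_def c_def by auto
  show lw: "length w = r" and "sorted_wrt (\<ge>) w" using gp by (auto simp: gen_partition_def)
  show xw: "\<forall>i<r. x!i \<le> w!i"
  proof (intro allI impI)
    fix i assume i: "i < r"
    have "(i+1, x!i) \<in> diagram x" using i lx by (auto simp: diagram_def)
    then have "(i+1, x!i) \<in> diagram w" using sub by blast
    then show "x!i \<le> w!i" by (simp add: diagram_def)
  qed
  have vnn: "\<forall>i<r. 0 \<le> v!i" using vp lv by (auto simp: is_partition_def)
  define D where "D = skew_diagram w x"
  have Deq: "D = rowset (\<lambda>i. w!i) (\<lambda>i. x!i) r"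
    unfolding D_def skew_diagram_def diagram_def rowset_def using lx lw by auto
  have Yeq: "young v = rowset (\<lambda>i. v!i) (\<lambda>_. 0) r"
    unfolding young_def rowset_def using lv by auto
  have bij: "bij_betw c D (young v)" using R unfolding LR_rules_def D_def by blast
  have rb: "fst (c z) \<le> fst z" if "z \<in> D" for z
    by (rule LR_row_bound[OF R[folded D_def] _ that]) (simp add: Deq rowset_def split: prod.splits)
  have cw: "int (card (rowset (\<lambda>i. w!i) (\<lambda>i. x!i) k)) = (\<Sum>i<k. w!i - x!i)" if "k \<le> r" for k
    using rowset_card[of "\<lambda>i. w!i" "\<lambda>i. x!i" k] xw that by (auto intro!: sum.cong)
  have cv: "int (card (rowset (\<lambda>i. v!i) (\<lambda>_. 0) k)) = (\<Sum>i<k. v!i)" if "k \<le> r" for k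
    using rowset_card[of "\<lambda>i. v!i" "\<lambda>_. 0" k] vnn that by (auto intro!: sum.cong)
  show "\<forall>k\<le>r. (\<Sum>i<k. w!i - x!i) \<le> (\<Sum>i<k. v!i)"
  proof (intro allI impI)
    fix k assume k: "k \<le> r"
    have Dk: "rowset (\<lambda>i. w!i) (\<lambda>i. x!i) k \<subseteq> D" using k by (auto simp: Deq rowset_def)
    have "c ` rowset (\<lambda>i. w!i) (\<lambda>i. x!i) k \<subseteq> rowset (\<lambda>i. v!i) (\<lambda>_. 0) k"
    proof
      fix y assume "y \<in> c ` rowset (\<lambda>i. w!i) (\<lambda>i. x!i) k"
      then obtain z where z: "z \<in> rowset (\<lambda>i. w!i) (\<lambda>i. x!i) k" "y = c z" by blast
      have zD: "z \<in> D" using z Dk by blast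
      have "y \<in> young v" using bij zD z by (auto simp: bij_betw_def)
      moreover have "fst y \<le> k" using rb[OF zD] z by (auto simp: rowset_def)
      ultimately show "y \<in> rowset (\<lambda>i. v!i) (\<lambda>_. 0) k" by (auto simp: Yeq rowset_def)
    qed
    moreover have "inj_on c (rowset (\<lambda>i. w!i) (\<lambda>i. x!i) k)"
      using bij Dk by (auto simp: bij_betw_def intro: inj_on_subset)
    moreover have "finite (rowset (\<lambda>i. v!i) (\<lambda>_. 0) k)" using rowset_card by blast
    ultimately have "card (rowset (\<lambda>i. w!i) (\<lambda>i. x!i) k) \<le> card (rowset (\<lambda>i. v!i) (\<lambda>_. 0) k)"
      by (intro card_inj_on_le)
    then show "(\<Sum>i<k. w!i - x!i) \<le> (\<Sum>i<k. v!i)" using cw[OF k] cv[OF k] by linarith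
  qed
  have "card D = card (young v)" using bij by (rule bij_betw_same_card)
  then have "int (card (rowset (\<lambda>i. w!i) (\<lambda>i. x!i) r)) = int (card (rowset (\<lambda>i. v!i) (\<lambda>_. 0) r))"
    using Deq Yeq by simp
  then show "(\<Sum>i<r. w!i - x!i) = (\<Sum>i<r. v!i)" using cw[of r] cv[of r] by simp
qed

definition mu :: "(nat \<Rightarrow> int) \<Rightarrow> (nat \<Rightarrow> int) \<Rightarrow> nat \<Rightarrow> int" where
  "mu p e k = (if k = 0 then 0 else max 0 (p (k - 1) - e (k - 1)))"

definition dl :: "(nat \<Rightarrow> int) \<Rightarrow> (nat \<Rightarrow> int) \<Rightarrow> nat \<Rightarrow> int" where
  "dl v e k = (\<Sum>i<k. v i - e i)"

definition eps :: "int \<Rightarrow> int \<Rightarrow> int" where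
  "eps pk ek = (if 2 \<le> ek \<and> 1 \<le> pk then 1 else 0)"

lemma step_ineq:
  fixes p e v C m dd :: int
  assumes "0 \<le> p" "0 \<le> e" "1 \<le> v" "0 \<le> C" "0 \<le> m" "m \<le> max 0 (p - e)" "0 \<le> dd" "0 \<le> dd + v - e"
    and Cb: "1 \<le> e \<Longrightarrow> 2 * max 0 (p - e) * (e - 1) + eps p e \<le> C - 2 * p"
  shows "(if 1 \<le> e then eps p e else 0) \<le> C - 2 * p + 2 * max 0 (p - e) * (dd + v - e) - 2 * m * dd"
proof (cases "e = 0")
  case True
  then have mp: "max 0 (p - e) = p" using assms by simp
  have "p * (dd + v) \<ge> p * (dd + 1)" using assms by (intro mult_left_mono) auto
  moreover have "m * dd \<le> p * dd" using assms mp by (intro mult_right_mono) auto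
  ultimately show ?thesis using True assms mp by (simp add: algebra_simps)
next
  case False
  then have e1: "1 \<le> e" using assms by simp
  define M where "M = max 0 (p - e)"
  have M0: "0 \<le> M" by (simp add: M_def)
  have "M * (dd + v - e) \<ge> M * (dd + 1 - e)" using assms M0 by (intro mult_left_mono) auto
  moreover have "m * dd \<le> M * dd" using assms by (intro mult_right_mono) (auto simp: M_def)
  moreover have "2 * M * (e - 1) + eps p e \<le> C - 2 * p" using Cb[OF e1] by (simp add: M_def)
  ultimately show ?thesis using e1 by (simp add: M_def[symmetric] algebra_simps)
qed

lemma invariant:
  fixes p e v C :: "nat \<Rightarrow> int"
  assumes p0: "\<forall>i<r. 0 \<le> p i" and e0: "\<forall>i<r. 0 \<le> e i" and v1: "\<forall>i<r. 1 \<le> v i"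
    and C0: "\<forall>i<r. 0 \<le> C i"
    and Cb: "\<forall>i<r. 1 \<le> e i \<longrightarrow> 2 * max 0 (p i - e i) * (e i - 1) + eps (p i) (e i) \<le> C i - 2 * p i"
    and wdec: "\<forall>i j. i \<le> j \<longrightarrow> j < r \<longrightarrow> p i - e i \<le> p j - e j"
    and dom: "\<forall>k\<le>r. 0 \<le> dl v e k"
  shows "k \<le> r \<Longrightarrow> (\<Sum>i<k. if 1 \<le> e i then eps (p i) (e i) else 0) \<le> (\<Sum>i<k. C i - 2 * p i) + 2 * mu p e k * dl v e k"
proof (induction k)
  case 0 then show ?case by (simp add: mu_def dl_def)
next
  case (Suc k)
  then have k: "k < r" by simp
  have IH: "(\<Sum>i<k. if 1 \<le> e i then eps (p i) (e i) else 0) \<le> (\<Sum>i<k. C i - 2 * p i) + 2 * mu p e k * dl v e k"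
    using Suc by simp
  have dlS: "dl v e (Suc k) = dl v e k + v k - e k" by (simp add: dl_def)
  have muS: "mu p e (Suc k) = max 0 (p k - e k)" by (simp add: mu_def)
  have mu0: "0 \<le> mu p e k" by (simp add: mu_def)
  have mule: "mu p e k \<le> max 0 (p k - e k)"
    using wdec[rule_format, of "k - 1" k] k by (auto simp: mu_def)
  have st: "(if 1 \<le> e k then eps (p k) (e k) else 0) \<le> C k - 2 * p k + 2 * max 0 (p k - e k) * (dl v e k + v k - e k) - 2 * mu p e k * dl v e k"
    by (rule step_ineq) (use p0 e0 v1 C0 Cb k dom mu0 mule dlS Suc.prems in auto)
  show ?case using IH st dlS muS by simp
qed

lemma hsum_bound:
  fixes e :: int and m :: nat
  assumes e1: "1 \<le> e"
  shows "2 * max 0 (int m - e) * (e - 1) + eps (int m) e \<le> (\<Sum>l<m. min (2 * e) (2 * int l + 3)) - 2 * int m"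
proof (induction m)
  case 0 have "max 0 (- e) = 0" using e1 by simp
  then show ?case by (simp add: eps_def)
next
  case (Suc m)
  have sS: "(\<Sum>l<Suc m. min (2 * e) (2 * int l + 3)) = (\<Sum>l<m. min (2 * e) (2 * int l + 3)) + min (2 * e) (2 * int m + 3)"
    by simp
  show ?case
  proof (cases "int m + 1 \<le> e")
    case True
    then have "max 0 (int (Suc m) - e) = 0" "max 0 (int m - e) = 0" by auto
    moreover have "eps (int (Suc m)) e \<le> eps (int m) e + (min (2 * e) (2 * int m + 3) - 2)"
      using e1 by (auto simp: eps_def)
    ultimately show ?thesis using Suc.IH sS by simp
  next
    case False
    then have a: "max 0 (int (Suc m) - e) = max 0 (int m - e) + 1" by auto
    have b: "min (2 * e) (2 * int m + 3) = 2 * e" using False by auto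
    have c: "eps (int (Suc m)) e = eps (int m) e" using False e1 by (auto simp: eps_def)
    have "2 * max 0 (int (Suc m) - e) * (e - 1) = 2 * max 0 (int m - e) * (e - 1) + 2 * (e - 1)"
      unfolding a by (simp add: algebra_simps)
    then show ?thesis using Suc.IH sS b c by simp
  qed
qed

lemma row_bound:
  fixes e p :: int and c :: "nat \<Rightarrow> int"
  assumes p0: "0 \<le> p" and e1: "1 \<le> e"
    and cb: "\<And>j. j < nat p \<Longrightarrow> min (2 * e) (2 * (p - int j) + 1) \<le> c j"
  shows "2 * max 0 (p - e) * (e - 1) + eps p e \<le> (\<Sum>j<nat p. c j) - 2 * p"
proof -
  define m where "m = nat p"
  have pm: "p = int m" using p0 by (simp add: m_def)
  have "(\<Sum>j<m. min (2 * e) (2 * (p - int j) + 1)) = (\<Sum>j<m. min (2 * e) (2 * (p - int (m - Suc j)) + 1))"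
    by (rule sum.nat_diff_reindex[symmetric])
  also have "\<dots> = (\<Sum>l<m. min (2 * e) (2 * int l + 3))"
  proof (intro sum.cong refl)
    fix j assume "j \<in> {..<m}"
    then have "int (m - Suc j) = int m - int j - 1" by (simp add: of_nat_diff)
    then show "min (2 * e) (2 * (p - int (m - Suc j)) + 1) = min (2 * e) (2 * int j + 3)"
      unfolding pm by simp
  qed
  finally have eq: "(\<Sum>j<m. min (2 * e) (2 * (p - int j) + 1)) = (\<Sum>l<m. min (2 * e) (2 * int l + 3))" .
  have "(\<Sum>j<m. min (2 * e) (2 * (p - int j) + 1)) \<le> (\<Sum>j<m. c j)"
    by (intro sum_mono) (use cb in \<open>auto simp: m_def[symmetric]\<close>)
  moreover have "2 * max 0 (p - e) * (e - 1) + eps p e \<le> (\<Sum>l<m. min (2 * e) (2 * int l + 3)) - 2 * p"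
    using hsum_bound[OF e1, of m] pm by simp
  ultimately show ?thesis using eq unfolding m_def by linarith
qed

lemma sum_split_add:
  fixes g :: "nat \<Rightarrow> 'a::comm_monoid_add"
  shows "(\<Sum>i<r+n. g i) = (\<Sum>i<r. g i) + (\<Sum>j<n. g (r+j))"
  by (induction n) (simp_all add: add.assoc)

lemma count_lt:
  fixes z :: int
  assumes "0 \<le> z"
  shows "(\<Sum>j<m. if int j < z then 1 else 0) = min (int m) z"
proof -
  have "{j. j < m \<and> int j < z} = {..<min m (nat z)}" using assms by auto
  then show ?thesis using card_filter_sum[of m "\<lambda>j. int j < z"] assms by auto
qed

lemma gauss2: "(\<Sum>j<m. 2 * int j) = int m * (int m - 1)"
  by (induction m) (simp_all add: algebra_simps)

lemma gauss_lt:
  fixes z :: int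
  assumes "0 \<le> z" "z \<le> int n"
  shows "(\<Sum>j<n. if int j < z then 2 * int j else 0) = z * (z - 1)"
proof -
  have "(\<Sum>j<n. if int j < z then 2 * int j else 0) = (\<Sum>j\<in>{j\<in>{..<n}. int j < z}. 2 * int j)"
    by (rule sum.inter_filter[symmetric]) simp
  also have "{j\<in>{..<n}. int j < z} = {..<nat z}" using assms by auto
  also have "(\<Sum>j\<in>{..<nat z}. 2 * int j) = z * (z - 1)" using gauss2[of "nat z"] assms by simp
  finally show ?thesis .
qed

definition pp :: "int list \<Rightarrow> nat \<Rightarrow> nat \<Rightarrow> int" where "pp u r i = u ! (r - 1 - i)"
definition ucf :: "int list \<Rightarrow> nat \<Rightarrow> nat \<Rightarrow> int" where "ucf u r j = int (card {k. k < r \<and> int j < u!k})"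

context
  fixes u :: "int list" and r n :: nat
  assumes up: "is_partition u" and lu: "length u = r" and u0: "u!0 \<le> int n"
begin

lemma u_nonneg: "k < r \<Longrightarrow> 0 \<le> u!k"
  using up lu by (auto simp: is_partition_def)

lemma u_dec: "k \<le> l \<Longrightarrow> l < r \<Longrightarrow> u!l \<le> u!k"
  using up lu unfolding is_partition_def
  by (cases "k = l") (auto dest: sorted_wrt_nth_less[of "(\<ge>)" u k l])

lemma u_le_n: "k < r \<Longrightarrow> u!k \<le> int n"
  using u_dec[of 0 k] u0 by simp

lemma p_inc: "i \<le> i' \<Longrightarrow> i' < r \<Longrightarrow> pp u r i \<le> pp u r i'"
  unfolding pp_def by (rule u_dec) auto

lemma p_range: "i < r \<Longrightarrow> 0 \<le> pp u r i \<and> pp u r i \<le> int n"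
  unfolding pp_def using u_nonneg u_le_n by auto

lemma conj_nth: "j < n \<Longrightarrow> conj_part n u ! j = ucf u r j"
proof -
  assume j: "j < n"
  have "[1..<n+1] ! j = 1 + j" using j by (intro nth_upt) simp
  moreover have "length [1..<n+1] = n" by simp
  ultimately have "conj_part n u ! j = int (card {i. i < length u \<and> int (1 + j) \<le> u ! i})"
    unfolding conj_part_def using j by (simp only: nth_map)
  also have "{i. i < length u \<and> int (1 + j) \<le> u ! i} = {k. k < r \<and> int j < u!k}" using lu by auto
  finally show ?thesis by (simp add: ucf_def)
qed

lemma length_conj[simp]: "length (conj_part n u) = n"
  by (simp add: conj_part_def)

lemma ucf_sum: "ucf u r j = (\<Sum>k<r. if int j < u!k then 1 else 0)"
  unfolding ucf_def by (rule card_filter_sum)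

lemma T1:
  assumes "i < r" "pp u r i \<le> int j"
  shows "ucf u r j \<le> int (r - 1 - i)"
proof -
  have "{k. k < r \<and> int j < u!k} \<subseteq> {..<r - 1 - i}"
  proof
    fix k assume k: "k \<in> {k. k < r \<and> int j < u!k}"
    show "k \<in> {..<r - 1 - i}"
    proof (rule ccontr)
      assume "k \<notin> {..<r - 1 - i}"
      then have "u!k \<le> u!(r - 1 - i)" using k by (intro u_dec) auto
      then show False using k assms by (simp add: pp_def)
    qed
  qed
  then have "card {k. k < r \<and> int j < u!k} \<le> card {..<r - 1 - i}" by (intro card_mono) auto
  then show ?thesis by (simp add: ucf_def)
qed

lemma T2:
  assumes "i < r" "int j < pp u r i"
  shows "int (r - i) \<le> ucf u r j"
proof -
  have "{..r - 1 - i} \<subseteq> {k. k < r \<and> int j < u!k}"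
  proof
    fix k assume k: "k \<in> {..r - 1 - i}"
    then have "u!(r - 1 - i) \<le> u!k" using assms by (intro u_dec) auto
    then show "k \<in> {k. k < r \<and> int j < u!k}" using k assms by (auto simp: pp_def)
  qed
  then have "card {..r - 1 - i} \<le> card {k. k < r \<and> int j < u!k}" by (intro card_mono) auto
  then show ?thesis using assms by (simp add: ucf_def)
qed

lemma T3: "j \<le> j' \<Longrightarrow> ucf u r j' \<le> ucf u r j"
  unfolding ucf_def by (auto intro!: card_mono)

lemma T4:
  assumes "i < r" "1 \<le> pp u r i" "\<forall>i'<i. pp u r i' = 0"
  shows "ucf u r (nat (pp u r i) - 1) = int (r - i)"
proof -
  have "int (r - i) \<le> ucf u r (nat (pp u r i) - 1)" using assms by (intro T2) auto
  moreover have "{k. k < r \<and> int (nat (pp u r i) - 1) < u!k} \<subseteq> {..r - 1 - i}"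
  proof
    fix k assume k: "k \<in> {k. k < r \<and> int (nat (pp u r i) - 1) < u!k}"
    show "k \<in> {..r - 1 - i}"
    proof (rule ccontr)
      assume "k \<notin> {..r - 1 - i}"
      then have "r - 1 - k < i" using k assms by auto
      then have "pp u r (r - 1 - k) = 0" using assms by auto
      moreover have "pp u r (r - 1 - k) = u!k" using k by (simp add: pp_def)
      ultimately show False using k assms by auto
    qed
  qed
  then have "card {k. k < r \<and> int (nat (pp u r i) - 1) < u!k} \<le> card {..r - 1 - i}" by (intro card_mono) auto
  then have "ucf u r (nat (pp u r i) - 1) \<le> int (r - i)" using assms by (simp add: ucf_def)
  ultimately show ?thesis by simp
qed

lemma reindex_p: "(\<Sum>i<r. f i (pp u r i)) = (\<Sum>k<r. f (r - 1 - k) (u!k))"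
proof -
  have "(\<Sum>k<r. f (r - 1 - k) (u!k)) = (\<Sum>i<r. f (r - 1 - (r - Suc i)) (u!(r - Suc i)))"
    by (rule sum.nat_diff_reindex[symmetric])
  also have "\<dots> = (\<Sum>i<r. f i (pp u r i))"
    by (intro sum.cong refl) (auto simp: pp_def)
  finally show ?thesis by simp
qed

lemma U1: "(\<Sum>j<n. ucf u r j) = (\<Sum>k<r. u!k)"
proof -
  have "(\<Sum>j<n. ucf u r j) = (\<Sum>k<r. \<Sum>j<n. if int j < u!k then 1 else 0)"
    unfolding ucf_sum by (rule sum.swap)
  also have "\<dots> = (\<Sum>k<r. u!k)"
  proof (intro sum.cong refl)
    fix k assume "k \<in> {..<r}"
    then have "0 \<le> u!k" "u!k \<le> int n" using u_nonneg u_le_n by auto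
    then show "(\<Sum>j<n. if int j < u!k then 1 else 0) = u!k" using count_lt[of "u!k" n] by simp
  qed
  finally show ?thesis .
qed

lemma U2: "(\<Sum>j<n. 2 * int j * ucf u r j) = (\<Sum>k<r. u!k * (u!k - 1))"
proof -
  have "(\<Sum>j<n. 2 * int j * ucf u r j) = (\<Sum>j<n. \<Sum>k<r. if int j < u!k then 2 * int j else 0)"
    unfolding ucf_sum by (simp add: sum_distrib_left if_distrib cong: if_cong)
  also have "\<dots> = (\<Sum>k<r. \<Sum>j<n. if int j < u!k then 2 * int j else 0)"
    by (rule sum.swap)
  also have "\<dots> = (\<Sum>k<r. u!k * (u!k - 1))"
    by (intro sum.cong refl gauss_lt) (use u_nonneg u_le_n in auto)
  finally show ?thesis .
qed

lemma U3: "(\<Sum>i<r. \<Sum>j<nat (pp u r i). ucf u r j) = (\<Sum>m<r. (2 * int m + 1) * u!m)"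
proof -
  have "(\<Sum>j<nat (pp u r i). ucf u r j) = (\<Sum>k<r. min (pp u r i) (u!k))" if i: "i < r" for i
  proof -
    have "(\<Sum>j<nat (pp u r i). ucf u r j) = (\<Sum>k<r. \<Sum>j<nat (pp u r i). if int j < u!k then 1 else 0)"
      unfolding ucf_sum by (rule sum.swap)
    also have "\<dots> = (\<Sum>k<r. min (pp u r i) (u!k))"
      by (intro sum.cong refl) (use u_nonneg count_lt p_range[OF i] in auto)
    finally show ?thesis .
  qed
  then have "(\<Sum>i<r. \<Sum>j<nat (pp u r i). ucf u r j) = (\<Sum>i<r. \<Sum>k<r. min (pp u r i) (u!k))"
    by simp
  also have "\<dots> = (\<Sum>i<r. \<Sum>k<r. min (u!i) (u!k))"
    using reindex_p[of "\<lambda>_ x. \<Sum>k<r. min x (u!k)"] by simp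
  also have "\<dots> = (\<Sum>i<r. \<Sum>k<r. u ! (max i k))"
  proof (intro sum.cong refl)
    fix i k assume "i \<in> {..<r}" "k \<in> {..<r}"
    then show "min (u!i) (u!k) = u ! (max i k)"
      using u_dec[of i k] u_dec[of k i] by (cases "i \<le> k") (auto simp: min_def max_def)
  qed
  also have "\<dots> = (\<Sum>m<r. (2 * int m + 1) * u!m)" by (rule sum_max_index)
  finally show ?thesis .
qed

lemma Uw: "(\<Sum>i<r. (2 * int (r - 1 - i) + 1) * pp u r i) = (\<Sum>m<r. (2 * int m + 1) * u!m)"
  using reindex_p[of "\<lambda>i x. (2 * int (r - 1 - i) + 1) * x"]
  by (simp add: Suc_diff_Suc)

end

context
  fixes d r :: nat and u v w :: "int list" and b :: "nat \<times> int \<Rightarrow> nat \<times> int"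
  assumes r1: "1 \<le> r" and rd: "r < d"
    and up: "is_partition u" and lu: "length u = r" and u0: "u ! 0 \<le> int (d - r)"
    and vp: "is_partition v" and lv: "length v = r" and plv: "plen v = r"
    and LRm: "(w, b) \<in> LR r (chi u) v"
    and adm: "admissible (w @ conj_part (d - r) u)"
begin

abbreviation "nn \<equiv> d - r"
abbreviation "p \<equiv> pp u r"
abbreviation "uc \<equiv> ucf u r"
abbreviation "aa \<equiv> w @ conj_part (d - r) u"
definition "ee i = w!i + pp u r i"
definition "qq i = w!i - int (i + 1)"
definition "tt j = ucf u r j - int (r + j + 1)"
definition "bb i = - pp u r i - int (i + 1)"

lemma dd: "r + nn = d" using rd by simp

lemma chi_nth: "i < r \<Longrightarrow> chi u ! i = - p i"
  unfolding chi_def pp_def using lu by (simp add: rev_nth)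

lemma length_chi: "length (chi u) = r" by (simp add: chi_def lu)

lemmas ext = LR_extract[OF LRm length_chi vp lv]

lemma lw: "length w = r" using ext by simp

lemma w_dec: "i \<le> j \<Longrightarrow> j < r \<Longrightarrow> w!j \<le> w!i"
  using ext(2) lw by (cases "i = j") (auto dest: sorted_wrt_nth_less[of "(\<ge>)" w i j])

lemma e_nonneg: "i < r \<Longrightarrow> 0 \<le> ee i"
  using ext(3) chi_nth by (auto simp: ee_def)

lemma v_pos: "i < r \<Longrightarrow> 1 \<le> v!i"
proof -
  assume i: "i < r"
  have "{i. i < length v \<and> v ! i \<noteq> 0} \<subseteq> {..<r}" using lv by auto
  moreover have "card {i. i < length v \<and> v ! i \<noteq> 0} = card {..<r}" using plv by (simp add: plen_def)
  ultimately have "{i. i < length v \<and> v ! i \<noteq> 0} = {..<r}" by (intro card_subset_eq) auto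
  then have "v!i \<noteq> 0" using i by auto
  moreover have "0 \<le> v!i" using vp lv i by (auto simp: is_partition_def)
  ultimately show ?thesis by simp
qed

lemma dom: "k \<le> r \<Longrightarrow> (\<Sum>i<k. ee i) \<le> (\<Sum>i<k. v!i)"
  using ext(4) chi_nth by (auto simp: ee_def)

lemma domeq: "(\<Sum>i<r. ee i) = (\<Sum>i<r. v!i)"
  using ext(5) chi_nth by (simp add: ee_def)

lemmas ufacts = p_inc[OF up lu u0] p_range[OF up lu u0] conj_nth[OF up lu u0] length_conj[OF up lu u0]
  T1[OF up lu u0] T2[OF up lu u0] T3[OF up lu u0] T4[OF up lu u0] U1[OF up lu u0] U2[OF up lu u0]
  U3[OF up lu u0] Uw[OF up lu u0] reindex_p[OF up lu u0]

lemma la: "length aa = d" using lw ufacts dd by simp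

lemma a_w: "i < r \<Longrightarrow> aa ! i = w ! i" using lw by (simp add: nth_append)
lemma a_u: "j < nn \<Longrightarrow> aa ! (r + j) = uc j" using lw ufacts by (simp add: nth_append)

lemma s_w: "i < r \<Longrightarrow> shiftI aa ! i = qq i"
  using la rd a_w by (simp add: shiftI_nth qq_def)
lemma s_u: "j < nn \<Longrightarrow> shiftI aa ! (r + j) = tt j"
  using la dd a_u by (simp add: shiftI_nth tt_def)

lemma dist: "distinct (shiftI aa)" using adm by (simp add: admissible_def)

lemma split_pairs:
  "(\<Sum>i<d. \<Sum>j<d. if i < j \<and> shiftI aa ! i < shiftI aa ! j then f i j else 0)
   = (\<Sum>i<r. \<Sum>j<nn. if qq i < tt j then f i (r + j) else (0::int))"
proof -
  let ?s = "\<lambda>k. shiftI aa ! k"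
  let ?g = "\<lambda>i j. if i < j \<and> ?s i < ?s j then f i j else (0::int)"
  have A: "?g i j = 0" if "i < r" "j < r" for i j
  proof -
    have "?s j \<le> ?s i" if "i < j" using w_dec[of i j] \<open>j < r\<close> \<open>i < r\<close> that s_w by (simp add: qq_def)
    then show ?thesis by auto
  qed
  have B: "?g i (r + j) = (if qq i < tt j then f i (r + j) else 0)" if "i < r" "j < nn" for i j
    using that s_w s_u by auto
  have C: "?g (r + i) j = 0" if "j < r" for i j using that by auto
  have D: "?g (r + i) (r + j) = 0" if "i < nn" "j < nn" for i j
  proof -
    have "?s (r + j) \<le> ?s (r + i)" if "i < j" using ufacts(7)[of i j] that s_u \<open>i < nn\<close> \<open>j < nn\<close>
      by (simp add: tt_def)
    then show ?thesis by auto
  qed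
  have e: "r + nn = d" using rd by simp
  have X: "(\<Sum>i<d. \<Sum>j<d. ?g i j) = (\<Sum>i<r + nn. \<Sum>j<r + nn. ?g i j)" by (simp only: e)
  have Y: "(\<Sum>i<r + nn. \<Sum>j<r + nn. ?g i j) = (\<Sum>i<r. \<Sum>j<r + nn. ?g i j) + (\<Sum>i<nn. \<Sum>j<r + nn. ?g (r + i) j)"
    by (rule sum_split_add)
  have Z1: "(\<Sum>j<r + nn. ?g i j) = (\<Sum>j<nn. if qq i < tt j then f i (r + j) else 0)" if i: "i < r" for i
  proof -
    have 1: "(\<Sum>j<r + nn. ?g i j) = (\<Sum>j<r. ?g i j) + (\<Sum>j<nn. ?g i (r + j))" by (rule sum_split_add)
    have 2: "(\<Sum>j<r. ?g i j) = 0" by (rule sum.neutral) (use i A in auto)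
    have 3: "(\<Sum>j<nn. ?g i (r + j)) = (\<Sum>j<nn. if qq i < tt j then f i (r + j) else 0)"
      by (rule sum.cong) (use i B in auto)
    from 1 2 3 show ?thesis by simp
  qed
  have Z2: "(\<Sum>j<r + nn. ?g (r + i) j) = 0" if i: "i < nn" for i
  proof -
    have 1: "(\<Sum>j<r + nn. ?g (r + i) j) = (\<Sum>j<r. ?g (r + i) j) + (\<Sum>j<nn. ?g (r + i) (r + j))" by (rule sum_split_add)
    have 2: "(\<Sum>j<r. ?g (r + i) j) = 0" by (rule sum.neutral) (use C in auto)
    have 3: "(\<Sum>j<nn. ?g (r + i) (r + j)) = 0" by (rule sum.neutral) (use i D in auto)
    from 1 2 3 show ?thesis by simp
  qed
  have W1: "(\<Sum>i<r. \<Sum>j<r + nn. ?g i j) = (\<Sum>i<r. \<Sum>j<nn. if qq i < tt j then f i (r + j) else 0)"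
    by (rule sum.cong) (use Z1 in auto)
  have W2: "(\<Sum>i<nn. \<Sum>j<r + nn. ?g (r + i) j) = 0"
    by (rule sum.neutral) (use Z2 in auto)
  show ?thesis using X Y W1 W2 by simp
qed

definition "cc i j = (if qq i < tt j then 2 * ee i else 2 * (tt j - bb i) + 1)"
definition "Cst i = (\<Sum>j<nat (pp u r i). cc i j)"
definition "Cost i = (\<Sum>j<d - r. if qq i < tt j then 2 * (tt j - qq i) + 1 else 0)"
definition "Base i = (\<Sum>j<nat (pp u r i). 2 * (tt j - bb i) + 1)"

lemma qb: "qq i = bb i + ee i" by (simp add: qq_def bb_def ee_def)

lemma far:
  assumes i: "i < r" and j: "j < nn" and pj: "p i \<le> int j"
  shows "\<not> qq i < tt j"
proof -
  have "uc j \<le> int (r - 1 - i)" using ufacts(5)[OF i pj] .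
  then have "tt j < bb i" using i pj by (simp add: tt_def bb_def of_nat_diff)
  moreover have "bb i \<le> qq i" using e_nonneg[OF i] qb by simp
  ultimately show ?thesis by simp
qed

lemma near:
  assumes i: "i < r" and j: "j < nat (p i)"
  shows "p i - int j \<le> tt j - bb i"
proof -
  have "int j < p i" using j by simp
  then have "int (r - i) \<le> uc j" using ufacts(6)[OF i] by blast
  then show ?thesis using i by (simp add: tt_def bb_def of_nat_diff)
qed

lemma pn: "i < r \<Longrightarrow> nat (p i) \<le> nn" using ufacts(2)[of i] by auto

lemma Cost_eq:
  assumes i: "i < r"
  shows "Cost i = Base i - Cst i"
proof -
  let ?f = "\<lambda>j. if qq i < tt j then 2 * (tt j - qq i) + 1 else (0::int)"
  define m where "m = nat (p i)"
  have mn: "m + (nn - m) = nn" using pn[OF i] by (simp add: m_def)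
  have "Cost i = (\<Sum>j<m + (nn - m). ?f j)" unfolding Cost_def mn ..
  also have "\<dots> = (\<Sum>j<m. ?f j) + (\<Sum>j<nn - m. ?f (m + j))" by (rule sum_split_add)
  also have "(\<Sum>j<nn - m. ?f (m + j)) = 0"
  proof (rule sum.neutral, intro ballI)
    fix j assume j: "j \<in> {..<nn - m}"
    have "\<not> qq i < tt (m + j)" using far[OF i, of "m + j"] j ufacts(2)[of i] i by (auto simp: m_def)
    then show "?f (m + j) = 0" by simp
  qed
  also have "(\<Sum>j<m. ?f j) = (\<Sum>j<m. (2 * (tt j - bb i) + 1) - cc i j)"
    by (rule sum.cong) (auto simp: cc_def qb)
  also have "\<dots> = Base i - Cst i" by (simp add: Base_def Cst_def m_def sum_subtractf)
  finally show ?thesis by simp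
qed

lemma Cst_nonneg: "i < r \<Longrightarrow> 0 \<le> Cst i"
  unfolding Cst_def
proof (rule sum_nonneg)
  fix j assume i: "i < r" and j: "j \<in> {..<nat (p i)}"
  have "0 \<le> ee i" using e_nonneg[OF i] .
  moreover have "p i - int j \<le> tt j - bb i" using near[OF i] j by simp
  moreover have "int j < p i" using j by simp
  ultimately show "0 \<le> cc i j" by (simp add: cc_def)
qed

lemma Cst_bound:
  assumes i: "i < r" and e1: "1 \<le> ee i"
  shows "2 * max 0 (p i - ee i) * (ee i - 1) + eps (p i) (ee i) \<le> Cst i - 2 * p i"
  unfolding Cst_def
proof (rule row_bound)
  show "0 \<le> p i" using ufacts(2)[OF i] by simp
  show "1 \<le> ee i" by fact
  fix j assume j: "j < nat (p i)"
  show "min (2 * ee i) (2 * (p i - int j) + 1) \<le> cc i j"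
    using near[OF i j] by (auto simp: cc_def)
qed

lemma Base_eq:
  assumes i: "i < r"
  shows "Base i = 2 * (\<Sum>j<nat (p i). uc j) + p i * (2 * p i + 2 * int i - 2 * int r + 1) - p i * (p i - 1)"
proof -
  have p0: "0 \<le> p i" using ufacts(2)[OF i] by simp
  have "Base i = (\<Sum>j<nat (p i). 2 * uc j + (2 * p i + 2 * int i - 2 * int r + 1) - 2 * int j)"
    unfolding Base_def by (intro sum.cong refl) (simp add: tt_def bb_def algebra_simps)
  also have "\<dots> = 2 * (\<Sum>j<nat (p i). uc j) + (\<Sum>j<nat (p i). (2 * p i + 2 * int i - 2 * int r + 1)) - (\<Sum>j<nat (p i). 2 * int j)"
    by (simp add: sum_subtractf sum.distrib sum_distrib_left)
  also have "(\<Sum>j<nat (p i). 2 * int j) = p i * (p i - 1)" using gauss2[of "nat (p i)"] p0 by simp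
  also have "(\<Sum>j<nat (p i). (2 * p i + 2 * int i - 2 * int r + 1)) = p i * (2 * p i + 2 * int i - 2 * int r + 1)"
    using p0 by simp
  finally show ?thesis .
qed

lemma key_identity:
  "(\<Sum>k<d. (2 * int k + 1) * aa ! k) - (\<Sum>k<r. (2 * int k + 1) * v ! k) - psize u - (\<Sum>i<r. Cost i)
   = (\<Sum>i<r. Cst i - 2 * p i) + 2 * (\<Sum>i<r. int i * (ee i - v ! i))"
proof -
  define SP where "SP = (\<Sum>i<r. p i)"
  define SPP where "SPP = (\<Sum>i<r. p i * p i)"
  define SIP where "SIP = (\<Sum>i<r. int i * p i)"
  define SIE where "SIE = (\<Sum>i<r. int i * ee i)"
  define SIV where "SIV = (\<Sum>i<r. int i * v ! i)"
  define SE where "SE = (\<Sum>i<r. ee i)"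
  define SV where "SV = (\<Sum>i<r. v ! i)"
  define SC where "SC = (\<Sum>i<r. Cst i)"
  have SEV: "SE = SV" using domeq by (simp add: SE_def SV_def)
  have e: "r + nn = d" using rd by simp
  have A1: "(\<Sum>k<d. (2 * int k + 1) * aa ! k) = (\<Sum>k<r. (2 * int k + 1) * aa ! k) + (\<Sum>j<nn. (2 * int (r + j) + 1) * aa ! (r + j))"
    using sum_split_add[of "\<lambda>k. (2 * int k + 1) * aa ! k" r nn] by (simp only: e)
  have A2: "(\<Sum>k<r. (2 * int k + 1) * aa ! k) = (\<Sum>i<r. (2 * int i + 1) * ee i) - (\<Sum>i<r. (2 * int i + 1) * p i)"
    by (simp add: sum_subtractf[symmetric] a_w ee_def algebra_simps)
  have A3: "(\<Sum>i<r. (2 * int i + 1) * ee i) = 2 * SIE + SE"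
    by (simp add: SIE_def SE_def sum.distrib sum_distrib_left algebra_simps)
  have A4: "(\<Sum>i<r. (2 * int i + 1) * p i) = 2 * SIP + SP"
    by (simp add: SIP_def SP_def sum.distrib sum_distrib_left algebra_simps)
  have A5: "(\<Sum>j<nn. (2 * int (r + j) + 1) * aa ! (r + j)) = (2 * int r + 1) * (\<Sum>j<nn. uc j) + (\<Sum>j<nn. 2 * int j * uc j)"
  proof -
    have "(\<Sum>j<nn. (2 * int (r + j) + 1) * aa ! (r + j)) = (\<Sum>j<nn. (2 * int (r + j) + 1) * uc j)"
      by (intro sum.cong refl) (simp only: a_u lessThan_iff)
    also have "\<dots> = (2 * int r + 1) * (\<Sum>j<nn. uc j) + (\<Sum>j<nn. 2 * int j * uc j)"
      by (simp add: sum.distrib sum_distrib_left algebra_simps)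
    finally show ?thesis .
  qed
  have U1': "(\<Sum>j<nn. uc j) = SP"
    using ufacts(9) ufacts(13)[of "\<lambda>_ x. x"] by (simp add: SP_def)
  have U2': "(\<Sum>j<nn. 2 * int j * uc j) = SPP - SP"
    using ufacts(10) ufacts(13)[of "\<lambda>_ x. x * (x - 1)"] by (simp add: SP_def SPP_def sum_subtractf algebra_simps)
  have V1: "(\<Sum>k<r. (2 * int k + 1) * v ! k) = 2 * SIV + SV"
    by (simp add: SIV_def SV_def sum.distrib sum_distrib_left algebra_simps)
  have PU: "psize u = SP"
    using ufacts(13)[of "\<lambda>_ x. x"] lu by (simp add: psize_def sum_list_sum_nth SP_def atLeast0LessThan)
  have CO: "(\<Sum>i<r. Cost i) = (\<Sum>i<r. Base i) - SC"
    using Cost_eq by (simp add: SC_def sum_subtractf)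
  have B1: "(\<Sum>i<r. Base i) = 2 * (\<Sum>i<r. \<Sum>j<nat (p i). uc j) + (\<Sum>i<r. p i * (2 * p i + 2 * int i - 2 * int r + 1) - p i * (p i - 1))"
    using Base_eq by (simp add: sum_subtractf sum.distrib sum_distrib_left)
  have B2: "(\<Sum>i<r. p i * (2 * p i + 2 * int i - 2 * int r + 1) - p i * (p i - 1)) = SPP + 2 * SIP - 2 * int r * SP + 2 * SP"
    by (simp add: SPP_def SIP_def SP_def sum_subtractf sum.distrib sum_distrib_left algebra_simps)
  have B3: "(\<Sum>i<r. \<Sum>j<nat (p i). uc j) = (\<Sum>i<r. (2 * int (r - 1 - i) + 1) * p i)"
    using ufacts(11) ufacts(12) by simp
  have B4: "(\<Sum>i<r. (2 * int (r - 1 - i) + 1) * p i) = (\<Sum>i<r. (2 * int r - 1) * p i - 2 * (int i * p i))"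
    by (intro sum.cong refl) (auto simp: of_nat_diff algebra_simps)
  have B5: "(\<Sum>i<r. (2 * int r - 1) * p i - 2 * (int i * p i)) = (2 * int r - 1) * SP - 2 * SIP"
    by (simp add: SP_def SIP_def sum_subtractf sum_distrib_left)
  have R1: "(\<Sum>i<r. Cst i - 2 * p i) = SC - 2 * SP"
    by (simp add: SC_def SP_def sum_subtractf sum_distrib_left)
  have R2: "(\<Sum>i<r. int i * (ee i - v ! i)) = SIE - SIV"
    by (simp add: SIE_def SIV_def sum_subtractf algebra_simps)
  have m1: "(2 * int r + 1) * SP = 2 * (int r * SP) + SP" by (simp add: algebra_simps)
  have m2: "(2 * int r - 1) * SP = 2 * (int r * SP) - SP" by (simp add: algebra_simps)
  have m3: "2 * int r * SP = 2 * (int r * SP)" by simp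
  show ?thesis
    unfolding A1 A2 A3 A4 A5 U1' U2' V1 PU CO B1 B2 B3 B4 B5 R1 R2 m1 m2 m3
    using SEV by (simp add: algebra_simps)
qed

definition "epsr i = (if 1 \<le> ee i then eps (pp u r i) (ee i) else 0)"

lemma dl_nonneg: "k \<le> r \<Longrightarrow> 0 \<le> dl (\<lambda>i. v ! i) ee k"
  using dom by (simp add: dl_def sum_subtractf)

lemma dl_r: "dl (\<lambda>i. v ! i) ee r = 0"
  using domeq by (simp add: dl_def sum_subtractf)

lemma epsr_nonneg: "0 \<le> epsr i" by (simp add: epsr_def eps_def)

lemma inv_app: "(\<Sum>i<r. epsr i) \<le> (\<Sum>i<r. Cst i - 2 * p i)"
proof -
  have "(\<Sum>i<r. if 1 \<le> ee i then eps (p i) (ee i) else 0) \<le> (\<Sum>i<r. Cst i - 2 * p i) + 2 * mu p ee r * dl (\<lambda>i. v ! i) ee r"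
  proof (rule invariant)
    show "\<forall>i<r. 0 \<le> p i" using ufacts(2) by auto
    show "\<forall>i<r. 0 \<le> ee i" using e_nonneg by auto
    show "\<forall>i<r. 1 \<le> v ! i" using v_pos by auto
    show "\<forall>i<r. 0 \<le> Cst i" using Cst_nonneg by auto
    show "\<forall>i<r. 1 \<le> ee i \<longrightarrow> 2 * max 0 (p i - ee i) * (ee i - 1) + eps (p i) (ee i) \<le> Cst i - 2 * p i"
      using Cst_bound by auto
    show "\<forall>i j. i \<le> j \<longrightarrow> j < r \<longrightarrow> p i - ee i \<le> p j - ee j"
      using w_dec by (auto simp: ee_def)
    show "\<forall>k\<le>r. 0 \<le> dl (\<lambda>i. v ! i) ee k" using dl_nonneg by auto
  qed simp
  then show ?thesis by (simp add: dl_r epsr_def)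
qed

lemma dl_sum: "(\<Sum>k<m. dl vv e (Suc k)) = (\<Sum>i<m. int (m - i) * (vv i - e i))"
proof (induction m)
  case 0 then show ?case by simp
next
  case (Suc m)
  have "(\<Sum>k<Suc m. dl vv e (Suc k)) = (\<Sum>i<m. int (m - i) * (vv i - e i)) + (\<Sum>i<Suc m. vv i - e i)"
    using Suc by (simp add: dl_def)
  also have "\<dots> = (\<Sum>i<Suc m. int (Suc m - i) * (vv i - e i))"
  proof -
    have "(\<Sum>i<Suc m. int (Suc m - i) * (vv i - e i)) = (\<Sum>i<Suc m. int (m - i) * (vv i - e i) + (vv i - e i))"
      by (intro sum.cong refl) (auto simp: Suc_diff_le algebra_simps)
    then show ?thesis by (simp add: sum.distrib)
  qed
  finally show ?case .
qed

definition "DD = (\<Sum>i<r. int i * (ee i - v ! i))"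

lemma DD_eq: "DD = (\<Sum>k<r. dl (\<lambda>i. v ! i) ee (Suc k))"
proof -
  have "(\<Sum>k<r. dl (\<lambda>i. v ! i) ee (Suc k)) = (\<Sum>i<r. int (r - i) * (v ! i - ee i))" by (rule dl_sum)
  also have "\<dots> = (\<Sum>i<r. int r * (v ! i - ee i) - int i * (v ! i - ee i))"
    by (intro sum.cong refl) (auto simp: of_nat_diff algebra_simps)
  also have "\<dots> = int r * (\<Sum>i<r. v ! i - ee i) + DD"
  proof -
    have n: "(\<Sum>i<r. int i * (v ! i - ee i)) = - DD"
      unfolding DD_def sum_negf[symmetric] by (intro sum.cong refl) (simp add: algebra_simps)
    show ?thesis unfolding sum_subtractf sum_distrib_left[symmetric] n by simp
  qed
  also have "(\<Sum>i<r. v ! i - ee i) = 0" using dl_r by (simp add: dl_def)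
  finally show ?thesis by simp
qed

lemma DD_ge: "i < r \<Longrightarrow> dl (\<lambda>i. v ! i) ee (Suc i) \<le> DD"
  unfolding DD_eq by (rule member_le_sum) (use dl_nonneg in auto)

lemma DD_nonneg: "0 \<le> DD"
  unfolding DD_eq by (rule sum_nonneg) (use dl_nonneg in auto)

lemma psi_id:
  assumes "sorted_wrt (>) (shiftI a)"
  shows "psi a = a"
proof -
  have "sorted_wrt (<) (rev (shiftI a))" using assms by (simp add: sorted_wrt_rev)
  then have "sorted (rev (shiftI a))" using strict_sorted_iff by blast
  moreover have "distinct (rev (shiftI a))" using \<open>sorted_wrt (<) (rev (shiftI a))\<close> strict_sorted_iff by blast
  ultimately have "sort (shiftI a) = rev (shiftI a)"
    by (intro sorted_distinct_set_unique) simp_all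
  then have "rev (sort (shiftI a)) = shiftI a" by simp
  then show ?thesis by (intro nth_equalityI) (simp_all add: psi_nth shiftI_nth)
qed

lemma core:
  assumes g: "1 \<le> (\<Sum>i<r. Cst i - 2 * p i) + 2 * DD"
  shows "psize u + int (inv_count aa) + 1 + norm2 v \<le> norm2 (psi aa)"
proof -
  define G1 where "G1 = (\<Sum>i<r. \<Sum>j<nn. if qq i < tt j then tt j - qq i else 0)"
  define I1 where "I1 = (\<Sum>i<r. \<Sum>j<nn. if qq i < tt j then 1 else (0::int))"
  have N1: "(\<Sum>k<d. (2 * int k + 1) * psi aa ! k) \<le> norm2 (psi aa)"
    using norm2_lower[of "psi aa"] psi_dec[OF dist] la by simp
  have PW: "(\<Sum>k<d. (2 * int k + 1) * psi aa ! k) = (\<Sum>k<d. (2 * int k + 1) * aa ! k)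
     - 2 * (\<Sum>i<d. \<Sum>j<d. if i < j \<and> shiftI aa ! i < shiftI aa ! j then shiftI aa ! j - shiftI aa ! i else 0)"
    using psi_weighted[OF dist] la by simp
  have S1: "(\<Sum>i<d. \<Sum>j<d. if i < j \<and> shiftI aa ! i < shiftI aa ! j then shiftI aa ! j - shiftI aa ! i else 0) = G1"
  proof -
    have "(\<Sum>i<d. \<Sum>j<d. if i < j \<and> shiftI aa ! i < shiftI aa ! j then shiftI aa ! j - shiftI aa ! i else 0)
      = (\<Sum>i<r. \<Sum>j<nn. if qq i < tt j then shiftI aa ! (r + j) - shiftI aa ! i else 0)"
      by (rule split_pairs)
    also have "\<dots> = G1" unfolding G1_def
      by (intro sum.cong refl) (simp add: s_w s_u)
    finally show ?thesis .
  qed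
  have INV: "int (inv_count aa) = I1"
    using inv_count_sum[of aa] split_pairs[of "\<lambda>_ _. 1"] la by (simp add: I1_def)
  have COST: "(\<Sum>i<r. Cost i) = 2 * G1 + I1"
  proof -
    have "Cost i = 2 * (\<Sum>j<nn. if qq i < tt j then tt j - qq i else 0) + (\<Sum>j<nn. if qq i < tt j then 1 else 0)" for i
    proof -
      have "Cost i = (\<Sum>j<nn. 2 * (if qq i < tt j then tt j - qq i else 0) + (if qq i < tt j then 1 else 0))"
        unfolding Cost_def by (intro sum.cong refl) simp
      then show ?thesis by (simp add: sum.distrib sum_distrib_left)
    qed
    then show ?thesis by (simp add: G1_def I1_def sum.distrib sum_distrib_left)
  qed
  have N2: "norm2 v \<le> (\<Sum>k<r. (2 * int k + 1) * v ! k)"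
    using norm2_upper[of v] vp lv by (simp add: is_partition_def)
  have K: "(\<Sum>k<d. (2 * int k + 1) * aa ! k) - (\<Sum>k<r. (2 * int k + 1) * v ! k) - psize u - (\<Sum>i<r. Cost i)
   = (\<Sum>i<r. Cst i - 2 * p i) + 2 * DD"
    using key_identity by (simp add: DD_def)
  show ?thesis using N1 PW S1 INV COST N2 K g by linarith
qed

lemma main_result:
  "((\<forall>x\<in>set u. x = 0) \<and> psi aa = v @ replicate nn 0)
   \<or> psize u + int (inv_count aa) + 1 + norm2 v \<le> norm2 (psi aa)"
proof (cases "\<forall>x\<in>set u. x = 0")
  case True
  have p0: "p i = 0" if "i < r" for i using True that lu by (simp add: pp_def)
  have C0: "Cst i = 0" if "i < r" for i using p0[OF that] by (simp add: Cst_def)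
  have G: "(\<Sum>i<r. Cst i - 2 * p i) + 2 * DD = 2 * DD" using p0 C0 by simp
  show ?thesis
  proof (cases "1 \<le> DD")
    case True
    then show ?thesis using core G by simp
  next
    case False
    then have D0: "DD = 0" using DD_nonneg by simp
    have dl0: "dl (\<lambda>i. v ! i) ee (Suc i) = 0" if "i < r" for i
      using DD_ge[OF that] dl_nonneg[of "Suc i"] that D0 by simp
    have dl0': "dl (\<lambda>i. v ! i) ee i = 0" if "i < r" for i
    proof (cases i)
      case 0 then show ?thesis by (simp add: dl_def)
    next
      case (Suc i') then show ?thesis using dl0[of i'] that by simp
    qed
    have wv: "w ! i = v ! i" if "i < r" for i
    proof -
      have "dl (\<lambda>i. v ! i) ee (Suc i) = dl (\<lambda>i. v ! i) ee i + v ! i - ee i" by (simp add: dl_def)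
      then have "ee i = v ! i" using dl0[OF that] dl0'[OF that] by simp
      then show ?thesis using p0[OF that] by (simp add: ee_def)
    qed
    have uc0: "uc j = 0" for j using True lu nth_mem by (fastforce simp: ucf_def)
    have aeq: "aa = v @ replicate nn 0"
    proof (rule nth_equalityI)
      show "length aa = length (v @ replicate nn 0)" using la lv rd by simp
      fix k assume k: "k < length aa"
      show "aa ! k = (v @ replicate nn 0) ! k"
      proof (cases "k < r")
        case True then show ?thesis using wv a_w lv by (simp add: nth_append)
      next
        case False
        then have "aa ! (r + (k - r)) = uc (k - r)" using k la by (intro a_u) auto
        then show ?thesis using False lv uc0 k la by (simp add: nth_append)
      qed
    qed
    have vdec: "v ! j \<le> v ! i" if "i \<le> j" "j < r" for i j
      using vp lv that unfolding is_partition_def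
      by (cases "i = j") (auto dest: sorted_wrt_nth_less[of "(\<ge>)" v i j])
    have adec: "aa ! j \<le> aa ! i" if "i < j" "j < d" for i j
    proof -
      have "aa ! k = (if k < r then v ! k else 0)" if "k < d" for k
        using aeq that lv by (simp add: nth_append)
      then show ?thesis using that vdec[of i j] v_pos[of i] by auto
    qed
    have "sorted_wrt (>) (shiftI aa)"
      unfolding sorted_wrt_iff_nth_less
    proof (intro allI impI)
      fix i j assume ij: "i < j" "j < length (shiftI aa)"
      then have "aa ! j \<le> aa ! i" using adec la by simp
      then show "shiftI aa ! j < shiftI aa ! i" using ij la by (simp add: shiftI_nth)
    qed
    then have "psi aa = aa" by (rule psi_id)
    then show ?thesis using True aeq by simp
  qed
next
  case False
  then obtain k where k: "k < r" "u ! k \<noteq> 0" using lu by (auto simp: in_set_conv_nth)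
  have "1 \<le> u ! k" using k u_nonneg[OF up lu u0] by force
  moreover have "u ! k \<le> u ! 0" using u_dec[OF up lu u0, of 0 k] k by simp
  ultimately have pr: "1 \<le> p (r - 1)" using r1 by (simp add: pp_def)
  define i0 where "i0 = (LEAST i. i < r \<and> 1 \<le> p i)"
  have i0: "i0 < r \<and> 1 \<le> p i0" unfolding i0_def by (rule LeastI[of _ "r - 1"]) (use pr r1 in auto)
  have below: "\<forall>i'<i0. p i' = 0"
  proof (intro allI impI)
    fix i' assume "i' < i0"
    then have "\<not> (i' < r \<and> 1 \<le> p i')" unfolding i0_def by (rule not_less_Least)
    moreover have "i' < r" using \<open>i' < i0\<close> i0 by simp
    ultimately show "p i' = 0" using ufacts(2)[of i'] by auto
  qed
  have epos: "0 \<le> (\<Sum>i<r. epsr i)" by (rule sum_nonneg) (simp add: epsr_nonneg)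
  have G1: "1 \<le> (\<Sum>i<r. Cst i - 2 * p i) + 2 * DD"
  proof (cases "ee i0 = 0")
    case True
    have "dl (\<lambda>i. v ! i) ee (Suc i0) = dl (\<lambda>i. v ! i) ee i0 + v ! i0 - ee i0" by (simp add: dl_def)
    then have "1 \<le> dl (\<lambda>i. v ! i) ee (Suc i0)" using True dl_nonneg[of i0] i0 v_pos[of i0] by simp
    then have "1 \<le> DD" using DD_ge i0 by force
    then show ?thesis using inv_app epos by simp
  next
    case False
    show ?thesis
    proof (cases "ee i0 = 1")
      case False
      then have "2 \<le> ee i0" using \<open>ee i0 \<noteq> 0\<close> e_nonneg[of i0] i0 by simp
      then have "epsr i0 = 1" using i0 by (simp add: epsr_def eps_def)
      moreover have "epsr i0 \<le> (\<Sum>i<r. epsr i)"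
        by (rule member_le_sum) (use i0 epsr_nonneg in auto)
      ultimately show ?thesis using inv_app DD_nonneg by simp
    next
      case True
      define J where "J = nat (p i0) - 1"
      have n1: "1 \<le> nat (p i0)" using i0 by linarith
      have pJ: "int J = p i0 - 1" unfolding J_def using i0 n1 by (simp add: of_nat_diff)
      have Jn: "J < nn" using ufacts(2)[of i0] i0 pJ by simp
      have ucJ: "uc J = int (r - i0)" unfolding J_def using ufacts(8)[of i0] i0 below by simp
      have "shiftI aa ! i0 = qq i0" using s_w i0 by simp
      also have "qq i0 = - p i0 - int i0" using True by (simp add: qq_def ee_def)
      also have "\<dots> = tt J" using ucJ pJ i0 by (simp add: tt_def of_nat_diff)
      also have "tt J = shiftI aa ! (r + J)" using s_u Jn by simp
      finally have "shiftI aa ! i0 = shiftI aa ! (r + J)" .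
      moreover have "i0 < length (shiftI aa)" "r + J < length (shiftI aa)" using i0 Jn la rd by auto
      ultimately have "i0 = r + J" using dist nth_eq_iff_index_eq by blast
      then show ?thesis using i0 by simp
    qed
  qed
  then show ?thesis using core by simp
qed

end

theorem lemma5p10:
  fixes d r :: nat and u v w :: "int list" and b :: "nat \<times> int \<Rightarrow> nat \<times> int"
  assumes "1 \<le> r" and "r < d"
    and "is_partition u" and "length u = r" and "u ! 0 \<le> int (d - r)"
    and "is_partition v" and "length v = r" and "plen v = r"
    and "(w, b) \<in> LR r (chi u) v"
    and "admissible (w @ conj_part (d - r) u)"
  shows "((\<forall>x\<in>set u. x = 0) \<and> psi (w @ conj_part (d - r) u) = v @ replicate (d - r) 0)
       \<or> psize u + int (inv_count (w @ conj_part (d - r) u)) + 1 + norm2 v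
           \<le> norm2 (psi (w @ conj_part (d - r) u))"
  by (rule main_result[OF assms])

end
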